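(* Let $\mathcal{H}$ be a complex Hilbert space and $T,W\in\mathcal{B}(\mathcal{H})$ with $W\geq0$. Then there exist $T_{lr},T_{ls}\in\mathcal{B}(\mathcal{H})$ such that $T=T_{lr}+T_{ls}$, $T_{lr}$ is $W$-left regular and $T_{ls}$ is $W$-left strongly singular.
   Context: $\mathcal{B}(\mathcal{H})$ is the set of bounded everywhere defined operators on $\mathcal{H}$; $S\geq0$ means $\langle Sf,f\rangle\geq0$ for all $f$. For non-negative $S,W\in\mathcal{B}(\mathcal{H})$: $S$ is $W$-absolutely continuous if $\langle Wf_n,f_n\rangle\to0$ and $\langle S(f_n-f_m),f_n-f_m\rangle\to0$ imply $\langle Sf_n,f_n\rangle\to0$; $S$ is $W$-singular if the only $Q\in\mathcal{B}(\mathcal{H})$ with $0\leq Q\leq S$ and $0\leq Q\leq W$ is $Q=0$. $M_l(T)$ is the set of non-negative $S_1\in\mathcal{B}(\mathcal{H})$ for which there is a non-negative $S_2\in\mathcal{B}(\mathcal{H})$ with $|\langle Tf,g\rangle|\leq\langle S_1f,f\rangle^{1/2}\langle S_2g,g\rangle^{1/2}$ for all $f,g\in\mathcal{H}$. $T$ is $W$-left regular if some $S_1\in M_l(T)$ is $W$-absolutely continuous, and $W$-left strongly singular if some $S_1\in M_l(T)$ is $W$-singular. *)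

theory Defs
  imports "HOL-Analysis.Analysis"
begin

class complex_vector = ab_group_add +
  fixes scaleC :: "complex \<Rightarrow> 'a \<Rightarrow> 'a"
  assumes scaleC_add_right: "scaleC a (x + y) = scaleC a x + scaleC a y"
    and scaleC_add_left: "scaleC (a + b) x = scaleC a x + scaleC b x"
    and scaleC_scaleC: "scaleC a (scaleC b x) = scaleC (a * b) x"
    and scaleC_one: "scaleC 1 x = x"

text \<open>Inner product, linear in the first and conjugate-linear in the second argument.\<close>
class complex_inner = complex_vector +
  fixes cinner :: "'a \<Rightarrow> 'a \<Rightarrow> complex"
  assumes cinner_add_left: "cinner (x + y) z = cinner x z + cinner y z"
    and cinner_scaleC_left: "cinner (scaleC a x) y = a * cinner x y"
    and cinner_commute: "cinner x y = cnj (cinner y x)"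
    and cinner_ge_zero: "Im (cinner x x) = 0 \<and> Re (cinner x x) \<ge> 0"
    and cinner_eq_zero_iff: "cinner x x = 0 \<longleftrightarrow> x = 0"
begin

definition cnorm :: "'a \<Rightarrow> real" where
  "cnorm x = sqrt (Re (cinner x x))"

end

class chilbert_space = complex_inner +
  assumes cauchy_convergent:
    "(\<forall>e>0. \<exists>N::nat. \<forall>m\<ge>N. \<forall>n\<ge>N. cnorm (X m - X n) < e) \<Longrightarrow>
     (\<exists>L. \<forall>e>0. \<exists>N::nat. \<forall>n\<ge>N. cnorm (X n - L) < e)"

definition bounded_op :: "('a::complex_inner \<Rightarrow> 'a) \<Rightarrow> bool" where
  "bounded_op T \<longleftrightarrow>
     (\<forall>x y. T (x + y) = T x + T y) \<and>
     (\<forall>a x. T (scaleC a x) = scaleC a (T x)) \<and>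
     (\<exists>K. \<forall>x. cnorm (T x) \<le> K * cnorm x)"

definition nonneg_op :: "('a::complex_inner \<Rightarrow> 'a) \<Rightarrow> bool" where
  "nonneg_op S \<longleftrightarrow> (\<forall>f. Im (cinner (S f) f) = 0 \<and> Re (cinner (S f) f) \<ge> 0)"

definition qform :: "('a::complex_inner \<Rightarrow> 'a) \<Rightarrow> 'a \<Rightarrow> real" where
  "qform S f = Re (cinner (S f) f)"

definition abs_continuous :: "('a::complex_inner \<Rightarrow> 'a) \<Rightarrow> ('a \<Rightarrow> 'a) \<Rightarrow> bool" where
  "abs_continuous W S \<longleftrightarrow>
     (\<forall>f :: nat \<Rightarrow> 'a.
        (\<lambda>n. qform W (f n)) \<longlonglongrightarrow> 0 \<longrightarrow>
        (\<forall>e>0. \<exists>N. \<forall>n\<ge>N. \<forall>m\<ge>N. qform S (f n - f m) < e) \<longrightarrow>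
        (\<lambda>n. qform S (f n)) \<longlonglongrightarrow> 0)"

definition singular_op :: "('a::complex_inner \<Rightarrow> 'a) \<Rightarrow> ('a \<Rightarrow> 'a) \<Rightarrow> bool" where
  "singular_op W S \<longleftrightarrow>
     (\<forall>Q. bounded_op Q \<and> nonneg_op Q \<and> nonneg_op (\<lambda>x. S x - Q x)
          \<and> nonneg_op (\<lambda>x. W x - Q x) \<longrightarrow> Q = (\<lambda>x. 0))"

definition M_l :: "('a::complex_inner \<Rightarrow> 'a) \<Rightarrow> ('a \<Rightarrow> 'a) set" where
  "M_l T = {S1. bounded_op S1 \<and> nonneg_op S1 \<and>
     (\<exists>S2. bounded_op S2 \<and> nonneg_op S2 \<and>
        (\<forall>f g. cmod (cinner (T f) g) \<le> sqrt (qform S1 f) * sqrt (qform S2 g)))}"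

definition left_regular :: "('a::complex_inner \<Rightarrow> 'a) \<Rightarrow> ('a \<Rightarrow> 'a) \<Rightarrow> bool" where
  "left_regular W T \<longleftrightarrow> (\<exists>S1\<in>M_l T. abs_continuous W S1)"

definition left_strongly_singular :: "('a::complex_inner \<Rightarrow> 'a) \<Rightarrow> ('a \<Rightarrow> 'a) \<Rightarrow> bool" where
  "left_strongly_singular W T \<longleftrightarrow> (\<exists>S1\<in>M_l T. singular_op W S1)"

end

theory Submission
  imports Defs
begin


lemma cinner_zero_left[simp]: "cinner 0 (y::'a::complex_inner) = 0"
  using cinner_add_left[of "0::'a" 0 y] by simp

lemma cinner_minus_left[simp]: "cinner (- x) (y::'a::complex_inner) = - cinner x y"
  proof -
  have "cinner x y + cinner (- x) y = 0" using cinner_add_left[of x "-x" y] by simp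
  thus ?thesis by (simp add: eq_neg_iff_add_eq_0 add.commute)
qed

lemma cinner_diff_left[simp]: "cinner (x - z) (y::'a::complex_inner) = cinner x y - cinner z y"
  using cinner_add_left[of x "-z" y] by simp

lemma cinner_add_right[simp]: "cinner (y::'a::complex_inner) (x + z) = cinner y x + cinner y z"
  by (metis cinner_commute cinner_add_left complex_cnj_add)

lemma cinner_zero_right[simp]: "cinner (y::'a::complex_inner) 0 = 0"
  by (metis cinner_commute cinner_zero_left complex_cnj_zero)

lemma cinner_minus_right[simp]: "cinner (y::'a::complex_inner) (- x) = - cinner y x"
  by (metis cinner_commute cinner_minus_left complex_cnj_minus)

lemma cinner_diff_right[simp]: "cinner (y::'a::complex_inner) (x - z) = cinner y x - cinner y z"
  by (metis cinner_commute cinner_diff_left complex_cnj_diff)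

lemma cinner_scaleC_right[simp]: "cinner (y::'a::complex_inner) (scaleC a x) = cnj a * cinner y x"
  by (metis cinner_commute cinner_scaleC_left complex_cnj_mult)

declare cinner_add_left[simp] cinner_scaleC_left[simp]

lemma scaleC_zero_right[simp]: "scaleC a (0::'a::complex_vector) = 0"
  using scaleC_add_right[of a "0::'a" 0] by simp

lemma scaleC_zero_left[simp]: "scaleC 0 (x::'a::complex_vector) = 0"
  using scaleC_add_left[of 0 0 x] by simp

lemma scaleC_minus_right: "scaleC a (- x::'a::complex_vector) = - scaleC a x"
  proof -
  have "scaleC a x + scaleC a (- x) = 0" using scaleC_add_right[of a x "-x"] by simp
  thus ?thesis by (simp add: eq_neg_iff_add_eq_0 add.commute)
qed

lemma scaleC_diff_right: "scaleC a (x - y::'a::complex_vector) = scaleC a x - scaleC a y"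
  using scaleC_add_right[of a x "-y"] by (simp add: scaleC_minus_right)

lemma cinner_self_real: "cinner x (x::'a::complex_inner) = complex_of_real (Re (cinner x x))"
  using cinner_ge_zero[of x] by (simp add: complex_eq_iff)

lemma cnorm_ge0: "cnorm (x::'a::complex_inner) \<ge> 0"
  using cinner_ge_zero[of x] by (simp add: cnorm_def)

lemma cnorm_sq: "(cnorm x)^2 = Re (cinner x (x::'a::complex_inner))"
  using cinner_ge_zero[of x] by (simp add: cnorm_def)

lemma cnorm_zero_iff[simp]: "cnorm x = 0 \<longleftrightarrow> x = (0::'a::complex_inner)"
  by (metis cinner_eq_zero_iff cinner_self_real cnorm_def of_real_0 real_sqrt_eq_zero_cancel_iff cinner_zero_left
      real_sqrt_zero zero_complex.simps(1))

lemma Re_cinner_self_zero_iff: "Re (cinner x x) = 0 \<longleftrightarrow> x = (0::'a::complex_inner)"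
  by (metis cnorm_sq cnorm_zero_iff zero_power2 power_eq_0_iff zero_neq_numeral)

lemma cauchy_schwarz: "cmod (cinner x y) \<le> cnorm x * cnorm (y::'a::complex_inner)"
proof (cases "y = 0")
  case True then show ?thesis by (simp add: cnorm_ge0)
next
  case False
  define c where "c = Re (cinner y y)"
  have c: "c > 0" using False cinner_ge_zero[of y] Re_cinner_self_zero_iff[of y] unfolding c_def by linarith
  define a where "a = cinner x y"
  define t where "t = a / complex_of_real c"
  have yy: "cinner y y = complex_of_real c" using cinner_self_real c_def by metis
  have yx: "cinner y x = cnj a" using cinner_commute a_def by metis
  have "0 \<le> Re (cinner (x - scaleC t y) (x - scaleC t y))" using cinner_ge_zero by blast
  also have "cinner (x - scaleC t y) (x - scaleC t y) = cinner x x - cnj t * a - t * cnj a + t * cnj t * c"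
    by (simp add: yy yx a_def algebra_simps)
  also have "\<dots> = cinner x x - a * cnj a / c"
    using c by (simp add: t_def field_simps)
  finally have "(cmod a)^2 / c \<le> Re (cinner x x)"
    by (simp add: complex_norm_square[symmetric] mult.commute)
  hence "(cmod a)^2 \<le> Re (cinner x x) * c" using c by (simp add: field_simps)
  also have "\<dots> = (cnorm x * cnorm y)^2" by (simp add: power_mult_distrib cnorm_sq c_def)
  finally show ?thesis unfolding a_def
    by (meson abs_le_square_iff cnorm_ge0 mult_nonneg_nonneg abs_of_nonneg norm_ge_zero power2_le_imp_le)
qed



lemma cnorm_sq_expand: "(cnorm (x + y))^2 = (cnorm x)^2 + 2 * Re (cinner x y) + (cnorm (y::'a::complex_inner))^2"
proof -
  have "cinner y x = cnj (cinner x y)" by (rule cinner_commute)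
  hence "Re (cinner y x) = Re (cinner x y)" by simp
  thus ?thesis by (simp add: cnorm_sq)
qed

lemma cnorm_triangle: "cnorm (x + y) \<le> cnorm x + cnorm (y::'a::complex_inner)"
proof -
  have "Re (cinner x y) \<le> cnorm x * cnorm y"
    using cauchy_schwarz[of x y] complex_Re_le_cmod[of "cinner x y"] by linarith
  hence "(cnorm (x + y))^2 \<le> (cnorm x + cnorm y)^2"
    by (simp add: cnorm_sq_expand power2_sum)
  thus ?thesis using cnorm_ge0 by (meson add_nonneg_nonneg power2_le_imp_le)
qed

lemma cnorm_scaleC: "cnorm (scaleC a x) = cmod a * cnorm (x::'a::complex_inner)"
proof -
  have "cinner (scaleC a x) (scaleC a x) = (a * cnj a) * cinner x x" by simp
  also have "a * cnj a = complex_of_real ((cmod a)^2)" by (rule complex_norm_square[symmetric])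
  also have "cinner x x = complex_of_real (Re (cinner x x))" by (rule cinner_self_real)
  finally have "Re (cinner (scaleC a x) (scaleC a x)) = (cmod a)^2 * Re (cinner x x)"
    by (simp only: of_real_mult[symmetric] Re_complex_of_real)
  thus ?thesis by (simp add: cnorm_def real_sqrt_mult)
qed

lemma minus_eq_scaleC: "- (x::'a::complex_vector) = scaleC (-1) x"
proof -
  have "x + scaleC (-1) x = 0"
    using scaleC_add_left[of 1 "-1" x] by (simp add: scaleC_one)
  thus ?thesis by (simp add: neg_eq_iff_add_eq_0)
qed

lemma cnorm_minus: "cnorm (- x) = cnorm (x::'a::complex_inner)"
  by (simp add: minus_eq_scaleC cnorm_scaleC)

lemma cnorm_commute: "cnorm (x - y) = cnorm (y - (x::'a::complex_inner))"
  by (metis cnorm_minus minus_diff_eq)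

lemma cnorm_triangle_diff: "cnorm (x - z) \<le> cnorm (x - y) + cnorm (y - (z::'a::complex_inner))"
  using cnorm_triangle[of "x - y" "y - z"] by simp

definition lin :: "('a::complex_vector \<Rightarrow> 'a) \<Rightarrow> bool" where
  "lin Q \<longleftrightarrow> (\<forall>x y. Q (x + y) = Q x + Q y) \<and> (\<forall>a x. Q (scaleC a x) = scaleC a (Q x))"

lemma bounded_op_lin: "bounded_op Q \<Longrightarrow> lin Q"
  by (simp add: bounded_op_def lin_def)

lemma lin_add: "lin Q \<Longrightarrow> Q (x + y) = Q x + Q y" by (simp add: lin_def)
lemma lin_scaleC: "lin Q \<Longrightarrow> Q (scaleC a x) = scaleC a (Q x)" by (simp add: lin_def)
lemma lin_zero: "lin Q \<Longrightarrow> Q 0 = 0"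
  using lin_add[of Q 0 0] by simp
lemma lin_minus: "lin Q \<Longrightarrow> Q (- x) = - Q x"
  by (simp add: minus_eq_scaleC lin_scaleC)
lemma lin_diff: "lin Q \<Longrightarrow> Q (x - y) = Q x - Q y"
  using lin_add[of Q x "-y"] lin_minus[of Q y] by simp

lemma hermitian:
  assumes "lin Q" "nonneg_op Q"
  shows "cinner (Q x) y = cnj (cinner (Q y) (x::'a::complex_inner))"
proof -
  define a where "a = cinner (Q x) y"
  define b where "b = cinner (Q y) x"
  have n: "\<And>z. Im (cinner (Q z) z) = 0" using assms(2) by (simp add: nonneg_op_def)
  have 1: "Im (cinner (Q (x + y)) (x + y)) = 0" by (rule n)
  hence "Im a + Im b = 0" using n[of x] n[of y] assms(1)
    by (simp add: lin_add a_def b_def)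
  have 2: "Im (cinner (Q (x + scaleC \<i> y)) (x + scaleC \<i> y)) = 0" by (rule n)
  hence "Re b - Re a = 0" using n[of x] n[of y] assms(1)
    by (simp add: lin_add lin_scaleC a_def b_def)
  show ?thesis using \<open>Im a + Im b = 0\<close> \<open>Re b - Re a = 0\<close>
    by (simp add: a_def[symmetric] b_def[symmetric] complex_eq_iff)
qed

lemma kernel:
  assumes "lin Q" "nonneg_op Q" "qform Q x = 0"
  shows "Q (x::'a::complex_inner) = 0"
proof -
  define y where "y = Q x"
  define c where "c = Re (cinner y y)"
  define r where "r = Re (cinner (Q y) y)"
  have c0: "c \<ge> 0" using cinner_ge_zero c_def by blast
  have xy: "Re (cinner (Q x) y) = c" by (simp add: y_def c_def)
  have yx: "Re (cinner (Q y) x) = c" using hermitian[OF assms(1,2), of y x] xy by simp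
  have q0: "Re (cinner (Q x) x) = 0" using assms(3) by (simp add: qform_def)
  have key: "2 * s * c \<le> s^2 * r" for s :: real
  proof -
    have "0 \<le> Re (cinner (Q (x - scaleC (complex_of_real s) y)) (x - scaleC (complex_of_real s) y))"
      using assms(2) unfolding nonneg_op_def by blast
    also have "Q (x - scaleC (complex_of_real s) y) = Q x - scaleC (complex_of_real s) (Q y)"
      using assms(1) by (simp add: lin_diff lin_scaleC)
    also have "Re (cinner (Q x - scaleC (complex_of_real s) (Q y)) (x - scaleC (complex_of_real s) y)) = Re (cinner (Q x) x) - s * Re (cinner (Q x) y) - s * Re (cinner (Q y) x) + s^2 * Re (cinner (Q y) y)"
      by (simp add: power2_eq_square algebra_simps)
    finally have "0 \<le> 0 - s * c - s * c + s^2 * r" using q0 xy yx r_def by simp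
    thus ?thesis by (simp add: mult.commute mult.left_commute)
  qed
  have "c \<le> 0"
  proof (cases "r \<le> 0")
    case True then show ?thesis using key[of 1] by simp
  next
    case False
    hence "r > 0" by simp
    have "2 * (c / r) * c \<le> (c / r)^2 * r" by (rule key)
    hence "2 * c * c \<le> c * c" using \<open>r > 0\<close> by (simp add: power2_eq_square field_simps)
    hence "c * c \<le> 0" by simp
    thus ?thesis using mult_pos_pos[of c c] by linarith
  qed
  hence "c = 0" using c0 by simp
  thus ?thesis using Re_cinner_self_zero_iff y_def c_def by metis
qed



lemma parallelogram: "(cnorm (u + v))^2 + (cnorm (u - v))^2 = 2 * (cnorm u)^2 + 2 * (cnorm (v::'a::complex_inner))^2"
  using cnorm_sq_expand[of u v] cnorm_sq_expand[of u "-v"] by (simp add: cnorm_minus)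

lemma orth_of_min:
  assumes "\<And>t. cnorm r \<le> cnorm (r - scaleC t z)"
  shows "cinner r (z::'a::complex_inner) = 0"
proof -
  define c where "c = cinner r z"
  define m where "m = (cmod c)^2"
  define q where "q = (cnorm z)^2"
  have m0: "m \<ge> 0" by (simp add: m_def)
  have q0: "q \<ge> 0" by (simp add: q_def)
  have cc: "c * cnj c = complex_of_real m" "cnj c * c = complex_of_real m"
    using complex_norm_square[of c] by (simp_all add: m_def mult.commute)
  have zr: "cinner z r = cnj c" using cinner_commute c_def by metis
  have key: "2 * s * m \<le> s^2 * m * q" if "s > 0" for s :: real
  proof -
    define t where "t = complex_of_real s * c"
    have "(cnorm r)^2 \<le> (cnorm (r - scaleC t z))^2"
      by (rule power_mono[OF assms cnorm_ge0])
    also have "(cnorm (r - scaleC t z))^2 = Re (cinner r r) - Re (cnj t * c) - Re (t * cnj c) + Re (t * cnj t * cinner z z)"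
      by (simp add: cnorm_sq c_def[symmetric] zr algebra_simps)
    also have "cnj t * c = complex_of_real (s * m)" by (simp add: t_def mult.assoc cc)
    also have "t * cnj c = complex_of_real (s * m)" by (simp add: t_def mult.assoc cc)
    also have "t * cnj t * cinner z z = complex_of_real (s^2 * m * q)"
    proof -
      have "t * cnj t = complex_of_real (s^2 * m)"
        by (simp add: t_def power2_eq_square cc(1)[symmetric] algebra_simps)
      moreover have "cinner z z = complex_of_real q" using cinner_self_real q_def cnorm_sq by metis
      ultimately show ?thesis by simp
    qed
    finally show ?thesis by (simp add: cnorm_sq mult.commute mult.left_commute)
  qed
  define s where "s = 1 / (q + 1)"
  have s0: "s > 0" using q0 by (simp add: s_def)
  have sq: "s * q \<le> 1" using q0 by (simp add: s_def field_simps)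
  have "2 * s * m \<le> s * (s * q) * m" using key[OF s0] by (simp add: power2_eq_square algebra_simps)
  also have "\<dots> \<le> s * m"
  proof -
    have h: "(s*q)*m \<le> m" using mult_right_mono[OF sq m0] by simp
    show ?thesis using mult_left_mono[OF h, of s] s0 by (simp add: mult.assoc)
  qed
  finally have "m * s \<le> 0" by (simp add: algebra_simps)
  hence "m \<le> 0" using s0 by (simp add: mult_le_0_iff)
  hence "cmod c = 0" using m_def by simp
  thus ?thesis by (simp add: c_def)
qed



lemma scaleC_two: "scaleC 2 (x::'a::complex_vector) = x + x"
  using scaleC_add_left[of 1 1 x] by (simp add: scaleC_one)

lemma proj_exists:
  fixes W :: "'a::chilbert_space \<Rightarrow> 'a"
  assumes "bounded_op W"
  shows "\<exists>e. W e = 0 \<and> (\<forall>z. W z = 0 \<longrightarrow> cinner (f - e) z = 0)"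
proof -
  have L: "lin W" using assms by (rule bounded_op_lin)
  obtain KW where KW: "\<And>x. cnorm (W x) \<le> KW * cnorm x" using assms unfolding bounded_op_def by blast
  define D where "D = {cnorm (f - k) | k. W k = 0}"
  define d where "d = Inf D"
  have D_ne: "cnorm (f - 0) \<in> D" using lin_zero[OF L] unfolding D_def by blast
  have D_bdd: "bdd_below D" unfolding D_def by (rule bdd_belowI[of _ 0]) (auto simp: cnorm_ge0)
  have d_le: "d \<le> cnorm (f - k)" if "W k = 0" for k
    unfolding d_def by (rule cInf_lower[OF _ D_bdd]) (use that in \<open>auto simp: D_def\<close>)
  have d0: "d \<ge> 0" unfolding d_def by (rule cInf_greatest) (use D_ne in \<open>auto simp: D_def cnorm_ge0\<close>)
  have "\<forall>n. \<exists>k. W k = 0 \<and> cnorm (f - k) < d + inverse (real (Suc n))"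
  proof
    fix n
    have "Inf D < d + inverse (real (Suc n))" by (simp add: d_def)
    then obtain x where "x \<in> D" "x < d + inverse (real (Suc n))" using cInf_lessD[of D] D_ne by blast
    thus "\<exists>k. W k = 0 \<and> cnorm (f - k) < d + inverse (real (Suc n))" by (auto simp: D_def)
  qed
  then obtain k where kK: "\<And>n. W (k n) = 0" and kd: "\<And>n. cnorm (f - k n) < d + inverse (real (Suc n))"
    by metis
  have bound: "(cnorm (k n - k m))^2 \<le> 4 * inverse (real (Suc N)) * (2 * d + 1)"
    if "n \<ge> N" "m \<ge> N" for n m N
  proof -
    define u where "u = f - k m"
    define v where "v = f - k n"
    define dl where "dl = inverse (real (Suc N))"
    have dl0: "0 < dl" "dl \<le> 1" by (auto simp: dl_def inverse_le_1_iff)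
    have dn: "inverse (real (Suc n)) \<le> dl" "inverse (real (Suc m)) \<le> dl"
      using that by (auto simp: dl_def intro!: le_imp_inverse_le)
    have uv: "u - v = k n - k m" by (simp add: u_def v_def)
    have "u + v = scaleC 2 (f - scaleC (1/2) (k n + k m))"
      by (simp add: scaleC_diff_right scaleC_scaleC scaleC_one scaleC_two u_def v_def algebra_simps)
    hence "cnorm (u + v) = 2 * cnorm (f - scaleC (1/2) (k n + k m))" by (simp add: cnorm_scaleC)
    moreover have "d \<le> cnorm (f - scaleC (1/2) (k n + k m))"
      by (rule d_le) (simp add: L lin_scaleC lin_add kK)
    ultimately have "2 * d \<le> cnorm (u + v)" by simp
    hence s1: "4 * d^2 \<le> (cnorm (u + v))^2" using d0 power_mono[of "2*d" _ 2] by (simp add: power_mult_distrib)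
    have "cnorm u \<le> d + dl" using kd[of m] dn by (simp add: u_def)
    hence s2: "(cnorm u)^2 \<le> (d + dl)^2" using cnorm_ge0 power_mono by blast
    have "cnorm v \<le> d + dl" using kd[of n] dn by (simp add: v_def)
    hence s3: "(cnorm v)^2 \<le> (d + dl)^2" using cnorm_ge0 power_mono by blast
    have "(cnorm (k n - k m))^2 \<le> 4 * (d + dl)^2 - 4 * d^2"
      using parallelogram[of u v, unfolded uv] s1 s2 s3 by linarith
    also have "\<dots> = 4 * dl * (2 * d + dl)" by (simp add: power2_eq_square algebra_simps)
    also have "\<dots> \<le> 4 * dl * (2 * d + 1)" using dl0 by simp
    finally show ?thesis by (simp add: dl_def)
  qed
  have cauchy: "\<forall>e>0. \<exists>N::nat. \<forall>m\<ge>N. \<forall>n\<ge>N. cnorm (k m - k n) < e"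
  proof (intro allI impI)
    fix e :: real assume e: "e > 0"
    have "e^2 / (4 * (2 * d + 1)) > 0" using e d0 by simp
    then obtain N where N: "inverse (real (Suc N)) < e^2 / (4 * (2 * d + 1))"
      using reals_Archimedean by blast
    have "cnorm (k m - k n) < e" if "m \<ge> N" "n \<ge> N" for m n
    proof -
      have "(cnorm (k m - k n))^2 \<le> 4 * inverse (real (Suc N)) * (2 * d + 1)" using bound that by blast
      also have "\<dots> < e^2" using N d0 by (simp add: field_simps)
      finally show ?thesis using e by (simp add: power_less_imp_less_base)
    qed
    thus "\<exists>N::nat. \<forall>m\<ge>N. \<forall>n\<ge>N. cnorm (k m - k n) < e" by blast
  qed
  obtain e0 where e0: "\<And>e. e > 0 \<Longrightarrow> \<exists>N. \<forall>n\<ge>N. cnorm (k n - e0) < e"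
    using cauchy_convergent[OF cauchy] by blast
  have We0: "W e0 = 0"
  proof -
    have "cnorm (W e0) \<le> 0 + eps" if eps: "eps > 0" for eps
    proof -
      obtain N where N: "cnorm (k N - e0) < eps / (\<bar>KW\<bar> + 1)"
        using e0[of "eps / (\<bar>KW\<bar> + 1)"] eps by fastforce
      have "W (e0 - k N) = W e0" using L kK by (simp add: lin_diff)
      hence "cnorm (W e0) \<le> KW * cnorm (e0 - k N)" using KW by metis
      also have "\<dots> \<le> \<bar>KW\<bar> * cnorm (k N - e0)" using cnorm_ge0 cnorm_commute
        by (metis abs_ge_self mult_right_mono)
      also have "\<dots> \<le> \<bar>KW\<bar> * (eps / (\<bar>KW\<bar> + 1))" using N by (intro mult_left_mono) auto
      also have "\<dots> \<le> eps" using eps by (simp add: field_simps)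
      finally show ?thesis by simp
    qed
    hence "cnorm (W e0) \<le> 0" by (rule field_le_epsilon)
    thus ?thesis using cnorm_ge0[of "W e0"] by simp
  qed
  have fe0: "cnorm (f - e0) \<le> d + 0"
  proof (rule field_le_epsilon)
    fix eps :: real assume eps: "eps > 0"
    obtain N1 where N1: "inverse (real (Suc N1)) < eps / 2" using reals_Archimedean eps
      by (metis half_gt_zero)
    obtain N2 where N2: "\<forall>n\<ge>N2. cnorm (k n - e0) < eps / 2" using e0[of "eps/2"] eps by auto
    define n where "n = max N1 N2"
    have "inverse (real (Suc n)) \<le> inverse (real (Suc N1))"
      by (auto simp: n_def intro!: le_imp_inverse_le)
    have "cnorm (f - e0) \<le> cnorm (f - k n) + cnorm (k n - e0)" by (rule cnorm_triangle_diff)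
    also have "\<dots> \<le> d + eps"
    proof -
      have a: "cnorm (k n - e0) < eps/2" using N2 by (simp add: n_def)
      have b: "cnorm (f - k n) < d + eps/2"
        using kd[of n] N1 \<open>inverse (real (Suc n)) \<le> inverse (real (Suc N1))\<close> by linarith
      show ?thesis using a b by linarith
    qed
    finally show "cnorm (f - e0) \<le> d + 0 + eps" by simp
  qed
  have orth: "cinner (f - e0) z = 0" if "W z = 0" for z
  proof (rule orth_of_min)
    fix t
    have "W (e0 + scaleC t z) = 0" using L We0 that by (simp add: lin_add lin_scaleC)
    hence "d \<le> cnorm (f - (e0 + scaleC t z))" by (rule d_le)
    thus "cnorm (f - e0) \<le> cnorm (f - e0 - scaleC t z)" using fe0 by (simp add: diff_diff_eq)
  qed
  show ?thesis using We0 orth by blast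
qed


definition projK :: "('a::chilbert_space \<Rightarrow> 'a) \<Rightarrow> 'a \<Rightarrow> 'a" where
  "projK W f = (SOME e. W e = 0 \<and> (\<forall>z. W z = 0 \<longrightarrow> cinner (f - e) z = 0))"
lemma projK:
  assumes "bounded_op W"
  shows "W (projK W f) = 0" "W z = 0 \<Longrightarrow> cinner (f - projK W f) z = 0"
  using someI_ex[OF proj_exists[OF assms, of f]] unfolding projK_def by blast+
lemma projK_unique:
  assumes W: "bounded_op W" and e: "W e = 0" and o: "\<And>z. W z = 0 \<Longrightarrow> cinner (f - e) z = 0"
  shows "projK W f = e"
proof -
  let ?p = "projK W f"
  have L: "lin W" using W by (rule bounded_op_lin)
  have "W (?p - e) = 0" using projK(1)[OF W] e L by (simp add: lin_diff)
  hence a: "cinner (f - ?p) (?p - e) = 0" using projK(2)[OF W] by blast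
  have b: "cinner (f - e) (?p - e) = 0" using o \<open>W (?p - e) = 0\<close> by blast
  have "(f - e) - (f - ?p) = ?p - e" by (simp add: algebra_simps)
  hence "cinner (?p - e) (?p - e) = cinner (f - e) (?p - e) - cinner (f - ?p) (?p - e)"
    by (metis cinner_diff_left)
  hence "cinner (?p - e) (?p - e) = 0" unfolding a b by (simp only: diff_self)
  hence "?p - e = 0" using cinner_eq_zero_iff by blast
  thus ?thesis by simp
qed

lemma projK_lin:
  assumes W: "bounded_op W"
  shows "lin (projK W)"
proof -
  have L: "lin W" using W by (rule bounded_op_lin)
  have add: "projK W (x + y) = projK W x + projK W y" for x y
  proof (rule projK_unique[OF W])
    show "W (projK W x + projK W y) = 0" using L projK(1)[OF W] by (simp add: lin_add)
    fix z assume z: "W z = 0"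
    have eq: "x + y - (projK W x + projK W y) = (x - projK W x) + (y - projK W y)" by (simp add: algebra_simps)
    have "cinner (x + y - (projK W x + projK W y)) z = cinner (x - projK W x) z + cinner (y - projK W y) z"
      unfolding eq by (rule cinner_add_left)
    thus "cinner (x + y - (projK W x + projK W y)) z = 0" unfolding projK(2)[OF W z] by simp
  qed
  have sc: "projK W (scaleC a x) = scaleC a (projK W x)" for a x
  proof (rule projK_unique[OF W])
    show "W (scaleC a (projK W x)) = 0" using L projK(1)[OF W] by (simp add: lin_scaleC)
    fix z assume z: "W z = 0"
    have "cinner (scaleC a x - scaleC a (projK W x)) z = a * cinner (x - projK W x) z"
      by (simp only: scaleC_diff_right[symmetric] cinner_scaleC_left)
    thus "cinner (scaleC a x - scaleC a (projK W x)) z = 0" unfolding projK(2)[OF W z] by simp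
  qed
  show ?thesis unfolding lin_def using add sc by blast
qed

lemma projK_id: "bounded_op W \<Longrightarrow> W k = 0 \<Longrightarrow> projK W k = k"
  using projK_unique[of W k k] by simp



lemma projlike:
  assumes L: "lin R" and c: "\<And>f. cinner (R f) f = cinner (R f) (R f)"
    and b: "\<And>f. cnorm (R f) \<le> cnorm (f::'a::complex_inner)"
  shows "bounded_op R" "nonneg_op R" "qform R f = (cnorm (R f))^2"
proof -
  show "bounded_op R" unfolding bounded_op_def using L b unfolding lin_def
    by (metis mult_1)
  show "nonneg_op R" unfolding nonneg_op_def c using cinner_ge_zero by blast
  show "qform R f = (cnorm (R f))^2" unfolding qform_def c by (simp add: cnorm_sq)
qed

lemma M_l_comp:
  assumes T: "bounded_op T" and R: "bounded_op R" "nonneg_op R"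
    and q: "\<And>f. qform R f = (cnorm (R f))^2"
  shows "R \<in> M_l (\<lambda>x. T (R x))"
proof -
  obtain K where K: "\<And>x. cnorm (T x) \<le> K * cnorm x" using T unfolding bounded_op_def by blast
  define c where "c = K^2"
  define S2 where "S2 = (\<lambda>g::'a. scaleC (complex_of_real c) g)"
  have c0: "c \<ge> 0" by (simp add: c_def)
  have S2b: "bounded_op S2"
    unfolding bounded_op_def S2_def
  proof (intro conjI allI exI)
    show "scaleC (complex_of_real c) (x + y) = scaleC (complex_of_real c) x + scaleC (complex_of_real c) y" for x y
      by (rule scaleC_add_right)
    show "scaleC (complex_of_real c) (scaleC a x) = scaleC a (scaleC (complex_of_real c) x)" for a x
      by (simp add: scaleC_scaleC mult.commute)
    show "cnorm (scaleC (complex_of_real c) x) \<le> c * cnorm x" for x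
      using c0 by (simp add: cnorm_scaleC)
  qed
  have S2c: "cinner (S2 g) g = complex_of_real (c * (cnorm g)^2)" for g
  proof -
    have "cinner (S2 g) g = complex_of_real c * cinner g g" by (simp add: S2_def)
    also have "cinner g g = complex_of_real ((cnorm g)^2)" using cinner_self_real cnorm_sq by metis
    finally show ?thesis by simp
  qed
  have S2n: "nonneg_op S2" unfolding nonneg_op_def S2c using c0 by simp
  have S2q: "qform S2 g = c * (cnorm g)^2" for g unfolding qform_def S2c by simp
  have ineq: "cmod (cinner (T (R f)) g) \<le> sqrt (qform R f) * sqrt (qform S2 g)" for f g
  proof -
    have "cmod (cinner (T (R f)) g) \<le> cnorm (T (R f)) * cnorm g" by (rule cauchy_schwarz)
    also have "\<dots> \<le> (\<bar>K\<bar> * cnorm (R f)) * cnorm g"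
    proof (rule mult_right_mono[OF _ cnorm_ge0])
      show "cnorm (T (R f)) \<le> \<bar>K\<bar> * cnorm (R f)"
        using K[of "R f"] cnorm_ge0[of "R f"] by (metis abs_ge_self mult_right_mono order_trans)
    qed
    also have "\<dots> = sqrt (qform R f) * sqrt (qform S2 g)"
      unfolding q S2q c_def using cnorm_ge0[of "R f"] cnorm_ge0[of g]
      by (simp add: real_sqrt_mult)
    finally show ?thesis .
  qed
  show ?thesis unfolding M_l_def using R S2b S2n ineq by blast
qed



context
  fixes W :: "'a::chilbert_space \<Rightarrow> 'a"
  assumes W: "bounded_op W"
begin

lemma EW: "W (projK W f) = 0" using projK(1)[OF W] .

lemma orthPE: "cinner (f - projK W f) (projK W g) = 0"
  using projK(2)[OF W EW] .

lemma orthEP: "cinner (projK W g) (f - projK W f) = 0"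
  using orthPE[of f g] cinner_commute[of "projK W g" "f - projK W f"] by simp

lemma EE: "projK W (projK W f) = projK W f" using projK_id[OF W EW] .

lemma Elin: "lin (projK W)" using projK_lin[OF W] .

lemma EP: "projK W (f - projK W f) = 0"
  using lin_diff[OF Elin, of f "projK W f"] EE by simp

lemma PE: "projK W f - projK W (projK W f) = 0"
  using EE by simp

lemma Plin: "lin (\<lambda>x. x - projK W x)"
  using Elin unfolding lin_def by (simp add: scaleC_diff_right algebra_simps)

lemma decomp: "f = projK W f + (f - projK W f)" by simp

lemma cinnerE: "cinner (projK W f) f = cinner (projK W f) (projK W f)"
proof -
  have "cinner (projK W f) f = cinner (projK W f) (projK W f) + cinner (projK W f) (f - projK W f)"
    by (subst decomp[of f]) (simp only: cinner_add_right add_diff_cancel_left')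
  thus ?thesis unfolding orthEP by simp
qed

lemma cinnerP: "cinner (f - projK W f) f = cinner (f - projK W f) (f - projK W f)"
proof -
  have "cinner (f - projK W f) f = cinner (f - projK W f) (projK W f) + cinner (f - projK W f) (f - projK W f)"
    by (subst decomp[of f]) (simp only: cinner_add_right add_diff_cancel_left')
  thus ?thesis unfolding orthPE by simp
qed

lemma pyth: "(cnorm f)^2 = (cnorm (projK W f))^2 + (cnorm (f - projK W f))^2"
proof -
  have "(cnorm f)^2 = (cnorm (projK W f + (f - projK W f)))^2" by simp
  also have "\<dots> = (cnorm (projK W f))^2 + 2 * Re (cinner (projK W f) (f - projK W f)) + (cnorm (f - projK W f))^2"
    by (rule cnorm_sq_expand)
  finally show ?thesis unfolding orthEP by simp
qed

lemma Ebound: "cnorm (projK W f) \<le> cnorm f"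
  using pyth[of f] cnorm_ge0 by (metis le_add_same_cancel1 power2_le_imp_le zero_le_power2)

lemma Pbound: "cnorm (f - projK W f) \<le> cnorm f"
  using pyth[of f] cnorm_ge0 by (metis le_add_same_cancel2 power2_le_imp_le zero_le_power2)

lemmas Eprops = projlike[of "projK W", OF Elin cinnerE Ebound]
lemmas Pprops = projlike[of "\<lambda>x. x - projK W x", OF Plin cinnerP Pbound]

end



lemma E_singular:
  fixes W :: "'a::chilbert_space \<Rightarrow> 'a"
  assumes W: "bounded_op W"
  shows "singular_op W (projK W)"
  unfolding singular_op_def
proof (intro allI impI)
  fix Q assume "bounded_op Q \<and> nonneg_op Q \<and> nonneg_op (\<lambda>x. projK W x - Q x) \<and> nonneg_op (\<lambda>x. W x - Q x)"
  hence Qb: "bounded_op Q" and Qn: "nonneg_op Q" and EQ: "nonneg_op (\<lambda>x. projK W x - Q x)"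
    and WQ: "nonneg_op (\<lambda>x. W x - Q x)" by auto
  have QL: "lin Q" using Qb by (rule bounded_op_lin)
  have Qge: "qform Q x \<ge> 0" for x using Qn by (simp add: nonneg_op_def qform_def)
  have le1: "qform Q x \<le> Re (cinner (projK W x) x)" for x
    using EQ unfolding nonneg_op_def qform_def by (metis cinner_diff_left minus_complex.sel(1) diff_ge_0_iff_ge)
  have le2: "qform Q x \<le> Re (cinner (W x) x)" for x
    using WQ unfolding nonneg_op_def qform_def by (metis cinner_diff_left minus_complex.sel(1) diff_ge_0_iff_ge)
  show "Q = (\<lambda>x. 0)"
  proof
    fix f
    have "qform Q (f - projK W f) \<le> 0" using le1[of "f - projK W f"] EP[OF W, of f] by simp
    hence "qform Q (f - projK W f) = 0" using Qge[of "f - projK W f"] by linarith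
    hence a: "Q (f - projK W f) = 0" by (rule kernel[OF QL Qn])
    have "qform Q (projK W f) \<le> 0" using le2[of "projK W f"] EW[OF W, of f] by simp
    hence "qform Q (projK W f) = 0" using Qge[of "projK W f"] by linarith
    hence b: "Q (projK W f) = 0" by (rule kernel[OF QL Qn])
    have "Q (projK W f + (f - projK W f)) = Q (projK W f) + Q (f - projK W f)" by (rule lin_add[OF QL])
    thus "Q f = 0" unfolding a b by simp
  qed
qed



lemma P_ac:
  fixes W :: "'a::chilbert_space \<Rightarrow> 'a"
  assumes W: "bounded_op W" and Wn: "nonneg_op W"
  shows "abs_continuous W (\<lambda>x. x - projK W x)"
  unfolding abs_continuous_def
proof (intro allI impI)
  fix h :: "nat \<Rightarrow> 'a"
  assume hW: "(\<lambda>n. qform W (h n)) \<longlonglongrightarrow> 0"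
    and hC: "\<forall>e>0. \<exists>N. \<forall>n\<ge>N. \<forall>m\<ge>N. qform (\<lambda>x. x - projK W x) (h n - h m) < e"
  define P where "P = (\<lambda>x::'a. x - projK W x)"
  have WL: "lin W" using W by (rule bounded_op_lin)
  obtain KW where KW: "\<And>x. cnorm (W x) \<le> KW * cnorm x" using W unfolding bounded_op_def by blast
  have KWa: "cnorm (W x) \<le> \<bar>KW\<bar> * cnorm x" for x
    using KW[of x] cnorm_ge0[of x] by (metis abs_ge_self mult_right_mono order_trans)
  have PL: "lin P" unfolding P_def using Plin[OF W] .
  have qP: "qform P f = (cnorm (P f))^2" for f unfolding P_def using Pprops(3)[OF W] by simp
  define X where "X = (\<lambda>n. P (h n))"
  have cauchy: "\<forall>e>0. \<exists>N::nat. \<forall>m\<ge>N. \<forall>n\<ge>N. cnorm (X m - X n) < e"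
  proof (intro allI impI)
    fix e :: real assume e: "e > 0"
    obtain N where N: "\<forall>n\<ge>N. \<forall>m\<ge>N. qform P (h n - h m) < e^2"
      using hC e unfolding P_def by (meson zero_less_power)
    have "cnorm (X m - X n) < e" if "m \<ge> N" "n \<ge> N" for m n
    proof -
      have "X m - X n = P (h m - h n)" unfolding X_def by (simp add: lin_diff[OF PL])
      hence "(cnorm (X m - X n))^2 < e^2" using N that qP by metis
      thus ?thesis using e by (simp add: power_less_imp_less_base)
    qed
    thus "\<exists>N::nat. \<forall>m\<ge>N. \<forall>n\<ge>N. cnorm (X m - X n) < e" by blast
  qed
  obtain g where g: "\<And>e. e > 0 \<Longrightarrow> \<exists>N. \<forall>n\<ge>N. cnorm (X n - g) < e"
    using cauchy_convergent[OF cauchy] by blast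
  define c where "c = (\<lambda>n. cnorm (X n - g))"
  have c_lim: "c \<longlonglongrightarrow> 0"
    unfolding LIMSEQ_iff c_def
  proof (intro allI impI)
    fix r :: real assume "r > 0"
    then obtain N where "\<forall>n\<ge>N. cnorm (X n - g) < r" using g by blast
    hence "\<forall>n\<ge>N. norm (cnorm (X n - g) - 0) < r" by (simp add: abs_of_nonneg cnorm_ge0)
    thus "\<exists>no. \<forall>n\<ge>no. norm (cnorm (X n - g) - 0) < r" by blast
  qed
  have g_orth: "cinner g z = 0" if z: "W z = 0" for z
  proof -
    have "cmod (cinner g z) \<le> c n * cnorm z" for n
    proof -
      have "cinner (X n) z = 0" unfolding X_def P_def by (rule projK(2)[OF W z])
      hence "cinner g z = cinner (g - X n) z" by simp
      hence "cmod (cinner g z) \<le> cnorm (g - X n) * cnorm z" using cauchy_schwarz by metis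
      thus ?thesis unfolding c_def using cnorm_commute by metis
    qed
    moreover have "(\<lambda>n. c n * cnorm z) \<longlonglongrightarrow> 0 * cnorm z" by (intro tendsto_intros c_lim)
    ultimately have "cmod (cinner g z) \<le> 0" using LIMSEQ_le_const by fastforce
    thus ?thesis by simp
  qed
  have qW: "qform W (X n) = qform W (h n)" for n
  proof -
    let ?x = "X n" and ?y = "projK W (h n)"
    have hx: "h n = ?x + ?y" unfolding X_def P_def by simp
    have Wy: "W ?y = 0" by (rule EW[OF W])
    have Wh: "W (h n) = W ?x" using lin_add[OF WL, of ?x ?y] Wy hx by simp
    have "cinner (W ?x) ?y = cnj (cinner (W ?y) ?x)" by (rule hermitian[OF WL Wn])
    hence cr: "cinner (W ?x) ?y = 0" unfolding Wy by simp
    have "cinner (W (h n)) (h n) = cinner (W ?x) ?x + cinner (W ?x) ?y"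
      unfolding Wh by (subst hx) (rule cinner_add_right)
    thus ?thesis unfolding qform_def cr by simp
  qed
  have bound: "qform W g \<le> qform W (h n) + \<bar>KW\<bar> * c n * (2 * cnorm g + c n)" for n
  proof -
    let ?x = "X n"
    define d where "d = g - ?x"
    have cd: "cnorm d = c n" unfolding d_def c_def using cnorm_commute by metis
    have gx: "g = ?x + d" unfolding d_def by simp
    have Wg: "W g = W ?x + W d" using lin_add[OF WL] gx by metis
    have "cinner (W g) g = cinner (W ?x) ?x + cinner (W ?x) d + cinner (W d) g"
    proof -
      have "cinner (W g) g = cinner (W ?x) g + cinner (W d) g" unfolding Wg by (rule cinner_add_left)
      also have "cinner (W ?x) g = cinner (W ?x) ?x + cinner (W ?x) d" by (subst gx) (rule cinner_add_right)
      finally show ?thesis .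
    qed
    hence "Re (cinner (W g) g) = Re (cinner (W ?x) ?x) + Re (cinner (W ?x) d) + Re (cinner (W d) g)" by simp
    moreover have "Re (cinner (W ?x) d) \<le> \<bar>KW\<bar> * (cnorm g + c n) * c n"
    proof -
      have "Re (cinner (W ?x) d) \<le> cnorm (W ?x) * cnorm d"
        using complex_Re_le_cmod cauchy_schwarz order_trans by blast
      also have "\<dots> \<le> (\<bar>KW\<bar> * cnorm ?x) * cnorm d" by (rule mult_right_mono[OF KWa cnorm_ge0])
      also have "cnorm ?x \<le> cnorm g + c n"
        using cnorm_triangle[of g "?x - g"] unfolding c_def by simp
      hence "(\<bar>KW\<bar> * cnorm ?x) * cnorm d \<le> (\<bar>KW\<bar> * (cnorm g + c n)) * cnorm d"
        by (intro mult_right_mono mult_left_mono cnorm_ge0) auto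
      finally show ?thesis unfolding cd .
    qed
    moreover have "Re (cinner (W d) g) \<le> \<bar>KW\<bar> * c n * cnorm g"
    proof -
      have "Re (cinner (W d) g) \<le> cnorm (W d) * cnorm g"
        using complex_Re_le_cmod cauchy_schwarz order_trans by blast
      also have "\<dots> \<le> (\<bar>KW\<bar> * cnorm d) * cnorm g" by (rule mult_right_mono[OF KWa cnorm_ge0])
      finally show ?thesis unfolding cd .
    qed
    ultimately have "qform W g \<le> qform W ?x + \<bar>KW\<bar> * (cnorm g + c n) * c n + \<bar>KW\<bar> * c n * cnorm g"
      unfolding qform_def by linarith
    also have "\<dots> = qform W (h n) + \<bar>KW\<bar> * c n * (2 * cnorm g + c n)"
      unfolding qW by (simp add: algebra_simps)
    finally show ?thesis .
  qed
  have "(\<lambda>n. qform W (h n) + \<bar>KW\<bar> * c n * (2 * cnorm g + c n)) \<longlonglongrightarrow> 0 + \<bar>KW\<bar> * 0 * (2 * cnorm g + 0)"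
    by (intro tendsto_intros hW c_lim)
  hence "qform W g \<le> 0 + \<bar>KW\<bar> * 0 * (2 * cnorm g + 0)"
    using bound LIMSEQ_le_const by fastforce
  moreover have "qform W g \<ge> 0" using Wn by (simp add: nonneg_op_def qform_def)
  ultimately have "qform W g = 0" by simp
  hence "W g = 0" by (rule kernel[OF WL Wn])
  hence "cinner g g = 0" by (rule g_orth)
  hence g0: "g = 0" using cinner_eq_zero_iff by blast
  have "(\<lambda>n. (c n)^2) \<longlonglongrightarrow> 0^2" by (intro tendsto_intros c_lim)
  moreover have "qform (\<lambda>x. x - projK W x) (h n) = (c n)^2" for n
    using qP[of "h n"] unfolding c_def X_def g0 P_def by simp
  ultimately show "(\<lambda>n. qform (\<lambda>x. x - projK W x) (h n)) \<longlonglongrightarrow> 0" by simp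
qed



lemma comp_bounded:
  assumes "bounded_op T" "bounded_op R"
  shows "bounded_op (\<lambda>x. T (R x))"
proof -
  obtain K where K: "\<And>x. cnorm (T x) \<le> K * cnorm x" using assms(1) unfolding bounded_op_def by blast
  obtain K2 where K2: "\<And>x. cnorm (R x) \<le> K2 * cnorm x" using assms(2) unfolding bounded_op_def by blast
  have "cnorm (T (R x)) \<le> (\<bar>K\<bar> * \<bar>K2\<bar>) * cnorm x" for x
  proof -
    have "cnorm (T (R x)) \<le> \<bar>K\<bar> * cnorm (R x)"
      using K[of "R x"] cnorm_ge0[of "R x"] by (metis abs_ge_self mult_right_mono order_trans)
    also have "cnorm (R x) \<le> \<bar>K2\<bar> * cnorm x"
      using K2[of x] cnorm_ge0[of x] by (metis abs_ge_self mult_right_mono order_trans)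
    hence "\<bar>K\<bar> * cnorm (R x) \<le> \<bar>K\<bar> * (\<bar>K2\<bar> * cnorm x)" by (simp add: mult_left_mono)
    finally show ?thesis by (simp add: mult.assoc)
  qed
  moreover have "lin (\<lambda>x. T (R x))" using bounded_op_lin[OF assms(1)] bounded_op_lin[OF assms(2)]
    unfolding lin_def by simp
  ultimately show ?thesis unfolding bounded_op_def lin_def by blast
qed

theorem mainTheorem4:
  fixes T W :: "'a::chilbert_space \<Rightarrow> 'a"
  assumes "bounded_op T" and "bounded_op W" and "nonneg_op W"
  shows "\<exists>Tlr Tls. bounded_op Tlr \<and> bounded_op Tls \<and>
           T = (\<lambda>x. Tlr x + Tls x) \<and>
           left_regular W Tlr \<and> left_strongly_singular W Tls"
proof (intro exI conjI)
  let ?E = "projK W" and ?P = "\<lambda>x. x - projK W x"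
  note Ep = Eprops[OF assms(2)] and Pp = Pprops[OF assms(2)]
  show "bounded_op (\<lambda>x. T (?P x))" by (rule comp_bounded[OF assms(1) Pp(1)])
  show "bounded_op (\<lambda>x. T (?E x))" by (rule comp_bounded[OF assms(1) Ep(1)])
  show "T = (\<lambda>x. T (?P x) + T (?E x))"
  proof
    fix x
    have "T (?P x + ?E x) = T (?P x) + T (?E x)" by (rule lin_add[OF bounded_op_lin[OF assms(1)]])
    thus "T x = T (?P x) + T (?E x)" by simp
  qed
  show "left_regular W (\<lambda>x. T (?P x))"
    unfolding left_regular_def
    using M_l_comp[OF assms(1) Pp(1) Pp(2) Pp(3)] P_ac[OF assms(2,3)] by blast
  show "left_strongly_singular W (\<lambda>x. T (?E x))"
    unfolding left_strongly_singular_def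
    using M_l_comp[OF assms(1) Ep(1) Ep(2) Ep(3)] E_singular[OF assms(2)] by blast
qed

end
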